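(* If $d_1\ge d_2\ge\cdots\ge d_n$, then first-fit satisfies $FF(I)<2\,OPT(I)$ for every such instance $I$ with $OPT(I)\ge2$ (and $FF(I)=1$ when $OPT(I)=1$); in particular first-fit is a 2-approximation on this class.
   Context: Fixed order scheduling with deadlines: there are jobs $J=\{1,\dots,n\}$, each job $j$ having a processing time $p_j\in\mathbb{N}$, $p_j>0$, and a deadline $d_j\in\mathbb{N}$ with $d_j\ge p_j$. All jobs are released at time $0$; job $j$ precedes job $k$ in the fixed order iff $j<k$. A schedule $\tau:J\to\{1,\dots,n\}$ assigns jobs to identical machines; each machine processes its jobs in the fixed order from time $0$ without idle time or preemption, so job $j$ completes at $\sum_{k\le j,\tau(k)=\tau(j)}p_k$; it is feasible if every job completes by its deadline. $OPT(I)$ is the minimum number of machines used by a feasible schedule. First-fit (FF): machines indexed $1,2,\dots$; process jobs in the fixed order and assign each job $j$ to the smallest-index machine whose current load (sum of processing times already assigned) plus $p_j$ is at most $d_j$; $FF(I)$ is the number of nonempty machines. *)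

theory Defs
  imports Main
begin

text \<open>Jobs are 1..n, processing times p, deadlines d (functions on nat; only
values on 1..n matter). Machines are indexed by positive naturals.\<close>

definition completion :: "(nat \<Rightarrow> nat) \<Rightarrow> nat \<Rightarrow> (nat \<Rightarrow> nat) \<Rightarrow> nat \<Rightarrow> nat" where
  "completion p n \<tau> j = (\<Sum>k\<in>{k\<in>{1..n}. k \<le> j \<and> \<tau> k = \<tau> j}. p k)"

definition feasible :: "(nat \<Rightarrow> nat) \<Rightarrow> (nat \<Rightarrow> nat) \<Rightarrow> nat \<Rightarrow> (nat \<Rightarrow> nat) \<Rightarrow> bool" where
  "feasible p d n \<tau> \<longleftrightarrow> (\<forall>j\<in>{1..n}. \<tau> j \<in> {1..n} \<and> completion p n \<tau> j \<le> d j)"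

definition OPT :: "(nat \<Rightarrow> nat) \<Rightarrow> (nat \<Rightarrow> nat) \<Rightarrow> nat \<Rightarrow> nat" where
  "OPT p d n = Min {card (\<tau> ` {1..n}) | \<tau>. feasible p d n \<tau>}"

text \<open>First-fit state after processing jobs 1..j: (assignment, load per machine).\<close>
fun ff_state :: "(nat \<Rightarrow> nat) \<Rightarrow> (nat \<Rightarrow> nat) \<Rightarrow> nat \<Rightarrow> (nat \<Rightarrow> nat) \<times> (nat \<Rightarrow> nat)" where
  "ff_state p d 0 = (\<lambda>_. 0, \<lambda>_. 0)"
| "ff_state p d (Suc j) =
     (let (a, L) = ff_state p d j;
          m = (LEAST m. 1 \<le> m \<and> L m + p (Suc j) \<le> d (Suc j))
      in (a(Suc j := m), L(m := L m + p (Suc j))))"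

definition FF :: "(nat \<Rightarrow> nat) \<Rightarrow> (nat \<Rightarrow> nat) \<Rightarrow> nat \<Rightarrow> nat" where
  "FF p d n = card (fst (ff_state p d n) ` {1..n})"

end

theory Submission
  imports Defs
begin
lemma sum_split_pt:
  assumes "finite A" "i \<notin> A \<Longrightarrow> f i = 0"
  shows "sum f A = f i + sum f (A - {i})"
  using assms by (cases "i \<in> A") (auto simp: sum.remove)

lemma ff_step:
  "ff_state p d (Suc t) =
     (let m = (LEAST m. 1 \<le> m \<and> snd (ff_state p d t) m + p (Suc t) \<le> d (Suc t))
      in ((fst (ff_state p d t))(Suc t := m),
          (snd (ff_state p d t))(m := snd (ff_state p d t) m + p (Suc t))))"
  by (simp add: Let_def split: prod.splits)

lemma opt_exists:
  fixes p d :: "nat \<Rightarrow> nat" and n :: nat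
  assumes dl: "\<forall>j\<in>{1..n}. p j \<le> d j"
  shows "\<exists>\<tau>::nat\<Rightarrow>nat. feasible p d n \<tau> \<and> card (\<tau> ` {1..n}) = OPT p d n"
proof -
  let ?S = "{card (\<tau> ` {1..n}) | \<tau>. feasible p d n \<tau>}"
  have "feasible p d n (\<lambda>j. j)"
    unfolding feasible_def completion_def
  proof
    fix j assume j: "j \<in> {1..n}"
    have "{k \<in> {1..n}. k \<le> j \<and> k = j} = {j}" using j by auto
    then show "j \<in> {1..n} \<and> (\<Sum>k\<in>{k \<in> {1..n}. k \<le> j \<and> k = j}. p k) \<le> d j"
      using j dl by simp
  qed
  then have ne: "?S \<noteq> {}" by blast
  have "?S \<subseteq> {0..n}"
  proof
    fix c assume "c \<in> ?S"
    then obtain \<tau> :: "nat \<Rightarrow> nat" where "c = card (\<tau> ` {1..n})" by blast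
    then show "c \<in> {0..n}" using card_image_le[of "{1..n}" \<tau>] by simp
  qed
  then have "finite ?S" using finite_subset by blast
  then have "OPT p d n \<in> ?S" unfolding OPT_def using Min_in ne by blast
  then obtain \<tau> :: "nat \<Rightarrow> nat" where "feasible p d n \<tau>" "OPT p d n = card (\<tau> ` {1..n})" by blast
  then show ?thesis by metis
qed
lemma scale_min:
  fixes a u v :: nat assumes "u \<le> v" shows "u * min a (2*v) \<le> v * min a (2*u)"
proof (cases "a \<le> 2*u")
  case True then have "min a (2*v) = a" "min a (2*u) = a" using assms by auto
  then show ?thesis using assms by (simp add: mult_right_mono)
next
  case False
  then have e: "min a (2*u) = 2*u" by auto
  have "u * min a (2*v) \<le> u * (2*v)" by simp
  also have "\<dots> = v * (2*u)" by simp
  finally show ?thesis using e by simp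
qed

lemma core:
  fixes L l :: "nat \<Rightarrow> nat" and A0 B0 :: "nat set" and x y p D u :: nat
  assumes fA: "finite A0" and fB: "finite B0"
    and old: "\<And>w. 1 \<le> w \<Longrightarrow> w \<le> D \<Longrightarrow>
       (\<Sum>m\<in>A0. min (L m) w) + min x w \<le> (\<Sum>m\<in>B0. min (l m) (2*w)) + min y (2*w)"
    and oth: "(x = 0 \<and> (\<forall>m\<in>A0. D < L m + p)) \<or> (0 < x \<and> (\<forall>m\<in>A0. D < L m + x))"
    and xp: "x + p \<le> D" and yp: "y + p \<le> D" and p1: "1 \<le> p" and u1: "1 \<le> u" and uD: "u \<le> D"
  shows "(\<Sum>m\<in>A0. min (L m) u) + min (x+p) u \<le> (\<Sum>m\<in>B0. min (l m) (2*u)) + min (y+p) (2*u)"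
proof -
  define SF where "SF w = (\<Sum>m\<in>A0. min (L m) w)" for w
  define SS where "SS w = (\<Sum>m\<in>B0. min (l m) (2*w))" for w
  define N where "N = card A0"
  have SFle: "SF u \<le> N * u" unfolding SF_def N_def
    using sum_bounded_above[of A0 "\<lambda>m. min (L m) u" u] by simp
  have oldu: "SF u + min x u \<le> SS u + min y (2*u)" using old[OF u1 uD] unfolding SF_def SS_def by simp
  have m1: "min x u \<le> min (x+p) u" and m2: "min y (2*u) \<le> min (y+p) (2*u)" by auto
  have "SF u + min (x+p) u \<le> SS u + min (y+p) (2*u)"
  proof (cases "min (x+p) u - min x u \<le> min (y+p) (2*u) - min y (2*u)")
    case True
    then show ?thesis using oldu m1 m2 by linarith
  next
    case False
    have xu: "x < u" using False by (auto simp: min_def split: if_splits)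
    have yu: "2*u < y + p" using False by (auto simp: min_def split: if_splits)
    have e2: "min (y+p) (2*u) = 2*u" using yu by simp
    have mxp: "min (x+p) u \<le> u" by simp
    show ?thesis
    proof (cases "y \<le> u")
      case True
      then have "SF u + x \<le> SS u + y" using oldu xu by simp
      then show ?thesis using True e2 mxp by linarith
    next
      case False
      define v where "v = (if x = 0 then D + 1 - p else D + 1 - x)"
      have vD: "v \<le> D" and uv: "u \<le> v" and Lv: "\<forall>m\<in>A0. v \<le> L m" and yv: "y < v + x"
        using oth xp yp p1 xu yu False unfolding v_def by auto
      have v1: "1 \<le> v" using u1 uv by simp
      have SFv: "SF v = N * v" unfolding SF_def N_def
      proof -
        have "(\<Sum>m\<in>A0. min (L m) v) = (\<Sum>m\<in>A0. v)" using Lv by (intro sum.cong) auto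
        then show "(\<Sum>m\<in>A0. min (L m) v) = card A0 * v" by simp
      qed
      have oldv: "SF v + min x v \<le> SS v + min y (2*v)" using old[OF v1 vD] unfolding SF_def SS_def by simp
      have "N * v + x \<le> SS v + y" using oldv SFv xu uv by (simp add: min_def split: if_splits)
      then have A: "N * v < SS v + v" using yv by linarith
      have sc: "u * SS v \<le> v * SS u" unfolding SS_def sum_distrib_left
        by (rule sum_mono) (rule scale_min[OF uv])
      have "(N * u) * v = u * (N * v)" by simp
      also have "\<dots> < u * (SS v + v)" using A u1 by simp
      also have "\<dots> = u * SS v + u * v" by (simp add: algebra_simps)
      also have "\<dots> \<le> v * SS u + u * v" using sc by simp
      also have "\<dots> = (SS u + u) * v" by (simp add: algebra_simps)
      finally have "N * u < SS u + u" by (simp add: mult_less_cancel2)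
      then show ?thesis using SFle e2 mxp by linarith
    qed
  qed
  then show ?thesis unfolding SF_def SS_def by simp
qed

theorem mainTheorem7:
  fixes p d :: "nat \<Rightarrow> nat" and n :: nat
  assumes pos: "\<forall>j\<in>{1..n}. 0 < p j"
    and dl: "\<forall>j\<in>{1..n}. p j \<le> d j"
    and dec: "\<forall>i j. 1 \<le> i \<longrightarrow> i \<le> j \<longrightarrow> j \<le> n \<longrightarrow> d j \<le> d i"
  shows "(OPT p d n \<ge> 2 \<longrightarrow> FF p d n < 2 * OPT p d n)
       \<and> (OPT p d n = 1 \<longrightarrow> FF p d n = 1)
       \<and> FF p d n \<le> 2 * OPT p d n"
proof -
  obtain \<tau> :: "nat \<Rightarrow> nat" where feas: "feasible p d n \<tau>" and optc: "card (\<tau> ` {1..n}) = OPT p d n"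
    using opt_exists[OF dl] by blast
  define LF where "LF t = snd (ff_state p d t)" for t
  define AF where "AF t = fst (ff_state p d t)" for t
  define ch where "ch t = (LEAST m. 1 \<le> m \<and> LF t m + p (Suc t) \<le> d (Suc t))" for t
  define KF where "KF t = {m. 0 < LF t m}" for t
  have LFs: "LF (Suc t) = (LF t)(ch t := LF t (ch t) + p (Suc t))" for t
    unfolding LF_def ch_def by (simp add: ff_step Let_def del: ff_state.simps)
  have AFs: "AF (Suc t) = (AF t)(Suc t := ch t)" for t
    unfolding AF_def LF_def ch_def by (simp add: ff_step Let_def del: ff_state.simps)
  have LF0: "LF 0 = (\<lambda>_. 0)" unfolding LF_def by simp
  have KF0: "KF 0 = {}" unfolding KF_def LF0 by simp
  have KFs: "KF (Suc t) = insert (ch t) (KF t)" if "Suc t \<le> n" for t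
  proof -
    have "0 < p (Suc t)" using pos that by auto
    then show ?thesis unfolding KF_def LFs by auto
  qed
  have ffinv: "t \<le> n \<Longrightarrow> (\<exists>k. KF t = {1..k}) \<and> AF t ` {1..t} = KF t" for t
  proof (induction t)
    case 0
    then show ?case using KF0 by auto
  next
    case (Suc t)
    then obtain k where k: "KF t = {1..k}" and im: "AF t ` {1..t} = KF t" by auto
    have "Suc k \<notin> KF t" using k by simp
    then have "LF t (Suc k) = 0" unfolding KF_def by simp
    then have fits: "1 \<le> Suc k \<and> LF t (Suc k) + p (Suc t) \<le> d (Suc t)" using dl Suc.prems by auto
    have c1: "1 \<le> ch t" using LeastI[of "\<lambda>m. 1 \<le> m \<and> LF t m + p (Suc t) \<le> d (Suc t)", OF fits]
      unfolding ch_def by simp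
    have ck: "ch t \<le> Suc k" unfolding ch_def by (rule Least_le[of "\<lambda>m. 1 \<le> m \<and> LF t m + p (Suc t) \<le> d (Suc t)", OF fits])
    have KF': "KF (Suc t) = insert (ch t) {1..k}" using KFs[OF Suc.prems] k by simp
    have "\<exists>k. KF (Suc t) = {1..k}"
    proof (cases "ch t \<le> k")
      case True then have "ch t \<in> {1..k}" using c1 by simp
      then have "KF (Suc t) = {1..k}" using KF' by (simp add: insert_absorb)
      then show ?thesis by blast
    next
      case False then have "ch t = Suc k" using ck by simp
      then have "KF (Suc t) = {1..Suc k}" using KF' by (simp add: atLeastAtMostSuc_conv)
      then show ?thesis by blast
    qed
    moreover have "AF (Suc t) ` {1..Suc t} = KF (Suc t)"
    proof -
      have "{1..Suc t} = insert (Suc t) {1..t}" by auto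
      moreover have "AF (Suc t) ` {1..t} = AF t ` {1..t}"
        by (rule image_cong) (simp_all add: AFs)
      moreover have "AF (Suc t) (Suc t) = ch t" by (simp add: AFs)
      ultimately have "AF (Suc t) ` {1..Suc t} = insert (ch t) (AF t ` {1..t})"
        by (simp only: image_insert)
      then show ?thesis using im KFs[OF Suc.prems] by simp
    qed
    ultimately show ?case by blast
  qed
  have finKF: "finite (KF t)" if tn: "t \<le> n" for t
  proof -
    obtain k where "KF t = {1..k}" using ffinv[OF tn] by blast
    then show ?thesis by simp
  qed
  have chprop: "1 \<le> ch t \<and> LF t (ch t) + p (Suc t) \<le> d (Suc t) \<and>
       (ch t \<notin> KF t \<longrightarrow> (\<forall>m\<in>KF t. d (Suc t) < LF t m + p (Suc t)))" if st: "Suc t \<le> n" for t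
  proof -
    obtain k where k: "KF t = {1..k}" using ffinv[of t] st by auto
    have "Suc k \<notin> KF t" using k by simp
    then have "LF t (Suc k) = 0" unfolding KF_def by simp
    then have fits: "1 \<le> Suc k \<and> LF t (Suc k) + p (Suc t) \<le> d (Suc t)" using dl st by auto
    have c1: "1 \<le> ch t \<and> LF t (ch t) + p (Suc t) \<le> d (Suc t)"
      using LeastI[of "\<lambda>m. 1 \<le> m \<and> LF t m + p (Suc t) \<le> d (Suc t)", OF fits]
      unfolding ch_def by simp
    have ck: "ch t \<le> Suc k" unfolding ch_def by (rule Least_le[of "\<lambda>m. 1 \<le> m \<and> LF t m + p (Suc t) \<le> d (Suc t)", OF fits])
    have "\<forall>m\<in>KF t. d (Suc t) < LF t m + p (Suc t)" if nin: "ch t \<notin> KF t"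
    proof
      fix m assume m: "m \<in> KF t"
      have "ch t = Suc k" using nin k c1 ck by auto
      then have "m < ch t" using m k by auto
      then have "\<not> (1 \<le> m \<and> LF t m + p (Suc t) \<le> d (Suc t))"
        unfolding ch_def by (rule not_less_Least)
      then show "d (Suc t) < LF t m + p (Suc t)" using m k by auto
    qed
    then show ?thesis using c1 by blast
  qed
  define lam where "lam t m = (\<Sum>s=1..t. if \<tau> s = m then p s else 0)" for t m
  define V where "V t = \<tau> ` {1..t}" for t
  have lams: "lam (Suc t) = (lam t)(\<tau> (Suc t) := lam t (\<tau> (Suc t)) + p (Suc t))" for t
    unfolding lam_def by (auto simp: fun_eq_iff)
  have lam0: "m \<notin> V t \<Longrightarrow> lam t m = 0" for t m unfolding lam_def V_def by (auto intro: sum.neutral)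
  have Vs: "V (Suc t) = insert (\<tau> (Suc t)) (V t)" for t
  proof -
    have "{1..Suc t} = insert (Suc t) {1..t}" by auto
    then show ?thesis unfolding V_def by simp
  qed
  have V0: "V 0 = {}" unfolding V_def by simp
  have finV: "finite (V t)" for t unfolding V_def by simp
  have fins: "lam t (\<tau> (Suc t)) + p (Suc t) \<le> d (Suc t)" if st: "Suc t \<le> n" for t
  proof -
    let ?j = "Suc t"
    have "completion p n \<tau> ?j \<le> d ?j" using feas st unfolding feasible_def by auto
    moreover have "{k \<in> {1..n}. k \<le> ?j \<and> \<tau> k = \<tau> ?j} = {k \<in> {1..?j}. \<tau> k = \<tau> ?j}" using st by auto
    ultimately have "(\<Sum>k\<in>{k \<in> {1..?j}. \<tau> k = \<tau> ?j}. p k) \<le> d ?j" unfolding completion_def by simp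
    moreover have "(\<Sum>k\<in>{k \<in> {1..?j}. \<tau> k = \<tau> ?j}. p k) = (\<Sum>k\<in>{1..?j}. if \<tau> k = \<tau> ?j then p k else 0)"
      by (rule sum.inter_filter) simp
    ultimately have "lam ?j (\<tau> ?j) \<le> d ?j" unfolding lam_def by simp
    then show ?thesis using lams[of t] by simp
  qed
  define INV where "INV t D \<longleftrightarrow> (\<forall>u. 1 \<le> u \<longrightarrow> u \<le> D \<longrightarrow>
      (\<Sum>m\<in>KF t. min (LF t m) u) \<le> (\<Sum>m\<in>V t. min (lam t m) (2*u))) \<and>
      (\<forall>a\<in>KF t. \<forall>b\<in>KF t. a \<noteq> b \<longrightarrow> D < LF t a + LF t b)" for t D
  have INVmono: "INV t D'" if "INV t D" "D' \<le> D" for t D D'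
  proof -
    have a: "\<forall>u. 1 \<le> u \<longrightarrow> u \<le> D \<longrightarrow>
      (\<Sum>m\<in>KF t. min (LF t m) u) \<le> (\<Sum>m\<in>V t. min (lam t m) (2*u))"
      and b: "\<forall>a\<in>KF t. \<forall>b\<in>KF t. a \<noteq> b \<longrightarrow> D < LF t a + LF t b"
      using that(1) unfolding INV_def by auto
    have a': "\<forall>u. 1 \<le> u \<longrightarrow> u \<le> D' \<longrightarrow>
      (\<Sum>m\<in>KF t. min (LF t m) u) \<le> (\<Sum>m\<in>V t. min (lam t m) (2*u))"
      using a that(2) by auto
    have b': "\<forall>a\<in>KF t. \<forall>b\<in>KF t. a \<noteq> b \<longrightarrow> D' < LF t a + LF t b"
      using b that(2) by fastforce
    show ?thesis unfolding INV_def using a' b' by blast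
  qed
  have INV0: "INV 0 D" for D unfolding INV_def KF0 V0 by simp
  have INVstep: "INV (Suc t) (d (Suc t))" if st: "Suc t \<le> n" and I: "INV t (d (Suc t))" for t
  proof -
    define c where "c = ch t"
    define z where "z = \<tau> (Suc t)"
    define q where "q = p (Suc t)"
    define D where "D = d (Suc t)"
    define A where "A = KF t"
    define B where "B = V t"
    have fA: "finite A" using finKF st unfolding A_def by simp
    have fB: "finite B" using finV unfolding B_def by simp
    have stn: "Suc t \<in> {1..n}" using st by simp
      have q1: "1 \<le> q" using pos stn unfolding q_def by (simp add: Suc_le_eq)
    have cp: "LF t c + q \<le> D" and rej: "c \<notin> A \<Longrightarrow> \<forall>m\<in>A. D < LF t m + q"
      using chprop[OF st] unfolding c_def q_def D_def A_def by auto
    have zp: "lam t z + q \<le> D" using fins[OF st] unfolding z_def q_def D_def by simp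
    have KF': "KF (Suc t) = insert c A" using KFs[OF st] unfolding c_def A_def by simp
    have V': "V (Suc t) = insert z B" using Vs unfolding z_def B_def by simp
    have LF': "LF (Suc t) = (LF t)(c := LF t c + q)" using LFs unfolding c_def q_def by simp
    have lam': "lam (Suc t) = (lam t)(z := lam t z + q)" using lams unfolding z_def q_def by simp
    have Iu: "\<And>u. 1 \<le> u \<Longrightarrow> u \<le> D \<Longrightarrow> (\<Sum>m\<in>A. min (LF t m) u) \<le> (\<Sum>m\<in>B. min (lam t m) (2*u))"
      using I unfolding INV_def A_def B_def D_def by blast
    have Ip: "\<And>a b. a \<in> A \<Longrightarrow> b \<in> A \<Longrightarrow> a \<noteq> b \<Longrightarrow> D < LF t a + LF t b"
      using I unfolding INV_def A_def D_def by blast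
    have cA: "c \<notin> A \<Longrightarrow> LF t c = 0" unfolding A_def KF_def by simp
    have zB: "z \<notin> B \<Longrightarrow> lam t z = 0" using lam0 unfolding B_def by simp
    have oldA: "(\<Sum>m\<in>A. min (LF t m) u) = min (LF t c) u + (\<Sum>m\<in>A-{c}. min (LF t m) u)" for u
      by (rule sum_split_pt[OF fA]) (simp add: cA)
    have oldB: "(\<Sum>m\<in>B. min (lam t m) (2*u)) = min (lam t z) (2*u) + (\<Sum>m\<in>B-{z}. min (lam t m) (2*u))" for u
      by (rule sum_split_pt[OF fB]) (simp add: zB)
    have newA: "(\<Sum>m\<in>KF (Suc t). min (LF (Suc t) m) u) = min (LF t c + q) u + (\<Sum>m\<in>A-{c}. min (LF t m) u)" for u
    proof -
      have "(\<Sum>m\<in>KF (Suc t). min (LF (Suc t) m) u) = min (LF (Suc t) c) u + (\<Sum>m\<in>A-{c}. min (LF (Suc t) m) u)"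
        unfolding KF' using fA by (simp add: sum.insert_remove)
      also have "(\<Sum>m\<in>A-{c}. min (LF (Suc t) m) u) = (\<Sum>m\<in>A-{c}. min (LF t m) u)"
        unfolding LF' by (intro sum.cong) auto
      finally show ?thesis unfolding LF' by simp
    qed
    have newB: "(\<Sum>m\<in>V (Suc t). min (lam (Suc t) m) (2*u)) = min (lam t z + q) (2*u) + (\<Sum>m\<in>B-{z}. min (lam t m) (2*u))" for u
    proof -
      have "(\<Sum>m\<in>V (Suc t). min (lam (Suc t) m) (2*u)) = min (lam (Suc t) z) (2*u) + (\<Sum>m\<in>B-{z}. min (lam (Suc t) m) (2*u))"
        unfolding V' using fB by (simp add: sum.insert_remove)
      also have "(\<Sum>m\<in>B-{z}. min (lam (Suc t) m) (2*u)) = (\<Sum>m\<in>B-{z}. min (lam t m) (2*u))"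
        unfolding lam' by (intro sum.cong) auto
      finally show ?thesis unfolding lam' by simp
    qed
    have oth: "(LF t c = 0 \<and> (\<forall>m\<in>A-{c}. D < LF t m + q)) \<or> (0 < LF t c \<and> (\<forall>m\<in>A-{c}. D < LF t m + LF t c))"
    proof (cases "c \<in> A")
      case True
      then have "0 < LF t c" unfolding A_def KF_def by simp
      moreover have "\<forall>m\<in>A-{c}. D < LF t m + LF t c" using Ip True by auto
      ultimately show ?thesis by blast
    next
      case False then show ?thesis using cA rej by auto
    qed
    have sums: "(\<Sum>m\<in>KF (Suc t). min (LF (Suc t) m) u) \<le> (\<Sum>m\<in>V (Suc t). min (lam (Suc t) m) (2*u))"
      if u1: "1 \<le> u" and uD: "u \<le> D" for u
    proof -
      have "(\<Sum>m\<in>A-{c}. min (LF t m) u) + min (LF t c + q) u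
          \<le> (\<Sum>m\<in>B-{z}. min (lam t m) (2*u)) + min (lam t z + q) (2*u)"
      proof (rule core[OF _ _ _ oth cp zp q1 u1 uD])
        show "finite (A - {c})" using fA by simp
        show "finite (B - {z})" using fB by simp
        fix w assume "1 \<le> w" "w \<le> D"
        then show "(\<Sum>m\<in>A-{c}. min (LF t m) w) + min (LF t c) w \<le> (\<Sum>m\<in>B-{z}. min (lam t m) (2*w)) + min (lam t z) (2*w)"
          using Iu[of w] oldA[of w] oldB[of w] by simp
      qed
      then show ?thesis using newA newB by simp
    qed
    have pairs: "\<forall>a\<in>KF (Suc t). \<forall>b\<in>KF (Suc t). a \<noteq> b \<longrightarrow> D < LF (Suc t) a + LF (Suc t) b"
    proof (intro ballI impI)
      fix a b assume a: "a \<in> KF (Suc t)" and b: "b \<in> KF (Suc t)" and ab: "a \<noteq> b"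
      have mono: "LF t m \<le> LF (Suc t) m" for m unfolding LF' by simp
      show "D < LF (Suc t) a + LF (Suc t) b"
      proof (cases "a \<in> A \<and> b \<in> A")
        case True
        then have "D < LF t a + LF t b" using Ip ab by blast
        then show ?thesis using mono[of a] mono[of b] by linarith
      next
        case False
        then have "(a = c \<and> a \<notin> A \<and> b \<in> A) \<or> (b = c \<and> b \<notin> A \<and> a \<in> A)" using a b ab KF' by auto
        then show ?thesis
        proof
          assume h: "a = c \<and> a \<notin> A \<and> b \<in> A"
          then have "D < LF t b + q" using rej by blast
          moreover have "LF (Suc t) a = LF t c + q" using h unfolding LF' by simp
          ultimately show ?thesis using mono[of b] by linarith
        next
          assume h: "b = c \<and> b \<notin> A \<and> a \<in> A"
          then have "D < LF t a + q" using rej by blast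
          moreover have "LF (Suc t) b = LF t c + q" using h unfolding LF' by simp
          ultimately show ?thesis using mono[of a] by linarith
        qed
      qed
    qed
    show ?thesis unfolding INV_def using sums pairs unfolding D_def by blast
  qed
  have INVall: "t \<le> n \<Longrightarrow> INV t (if t = 0 then 0 else d t)" for t
  proof (induction t)
    case 0 then show ?case using INV0 by simp
  next
    case (Suc t)
    have "INV t (d (Suc t))"
    proof (cases "t = 0")
      case True then show ?thesis using INV0 by simp
    next
      case False
      then have "INV t (d t)" using Suc by simp
      moreover have "d (Suc t) \<le> d t" using dec Suc.prems False by auto
      ultimately show ?thesis using INVmono by blast
    qed
    then show ?case using INVstep Suc.prems by simp
  qed
  have INVpre: "Suc t \<le> n \<Longrightarrow> INV t (d (Suc t))" for t
  proof (cases "t = 0")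
    case True then show ?thesis using INV0 by simp
  next
    case False
    assume st: "Suc t \<le> n"
    then have "INV t (d t)" using INVall[of t] False by simp
    moreover have "d (Suc t) \<le> d t" using dec st False by auto
    ultimately show ?thesis using INVmono by blast
  qed
  have cnt: "t \<le> n \<Longrightarrow> 1 \<le> t \<Longrightarrow> card (KF t) + 1 \<le> 2 * card (V t)" for t
  proof (induction t)
    case 0 then show ?case by simp
  next
    case (Suc t)
    have st: "Suc t \<le> n" using Suc.prems by simp
    show ?case
    proof (cases "ch t \<in> KF t")
      case True
      then have t1: "1 \<le> t" using KF0 by (cases t) auto
      have "KF (Suc t) = KF t" using KFs[OF st] True by auto
      moreover have "card (V t) \<le> card (V (Suc t))" using Vs finV by (simp add: card_mono subset_insertI)
      ultimately show ?thesis using Suc.IH st t1 by simp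
    next
      case False
      define q where "q = p (Suc t)"
      define D where "D = d (Suc t)"
      define u where "u = D + 1 - q"
      define z where "z = \<tau> (Suc t)"
      define W where "W = card (V t - {z})"
      have stn: "Suc t \<in> {1..n}" using st by simp
      have q1: "1 \<le> q" using pos stn unfolding q_def by (simp add: Suc_le_eq)
      have qD: "q \<le> D" using dl stn unfolding q_def D_def by blast
      have u1: "1 \<le> u" and uD: "u \<le> D" using q1 qD unfolding u_def by auto
      have rej: "\<forall>m\<in>KF t. D < LF t m + q" using chprop[OF st] False unfolding D_def q_def by auto
      have fA: "finite (KF t)" using finKF st by simp
      have "(\<Sum>m\<in>KF t. min (LF t m) u) = (\<Sum>m\<in>KF t. u)"
        using rej unfolding u_def by (intro sum.cong) auto
      then have lhs: "(\<Sum>m\<in>KF t. min (LF t m) u) = card (KF t) * u" by simp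
      have I: "(\<Sum>m\<in>KF t. min (LF t m) u) \<le> (\<Sum>m\<in>V t. min (lam t m) (2*u))"
        using INVpre[OF st] u1 uD unfolding INV_def D_def by blast
      have zB: "z \<notin> V t \<Longrightarrow> lam t z = 0" using lam0 by simp
      have split: "(\<Sum>m\<in>V t. min (lam t m) (2*u)) = min (lam t z) (2*u) + (\<Sum>m\<in>V t-{z}. min (lam t m) (2*u))"
        by (rule sum_split_pt[OF finV]) (simp add: zB)
      have zp: "lam t z + q \<le> D" using fins[OF st] unfolding z_def q_def D_def by simp
      then have zlt: "min (lam t z) (2*u) < u" unfolding u_def using q1 by simp
      have "(\<Sum>m\<in>V t-{z}. min (lam t m) (2*u)) \<le> W * (2*u)"
        unfolding W_def using sum_bounded_above[of "V t - {z}" "\<lambda>m. min (lam t m) (2*u)" "2*u"] by simp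
      then have lt: "card (KF t) * u < (2*W + 1) * u" using lhs I split zlt by (simp add: algebra_simps)
      have kw: "card (KF t) < 2*W + 1"
      proof (rule ccontr)
        assume "\<not> card (KF t) < 2*W + 1"
        then have "2*W + 1 \<le> card (KF t)" by simp
        then have "(2*W + 1) * u \<le> card (KF t) * u" by (rule mult_le_mono1)
        then show False using lt by simp
      qed
      have c1: "card (KF (Suc t)) = card (KF t) + 1" using KFs[OF st] False fA by simp
      have c2: "card (V (Suc t)) = W + 1" using Vs[of t] finV unfolding W_def z_def
        by (simp add: card.insert_remove)
      show ?thesis using c1 c2 kw by simp
    qed
  qed
  have FFeq: "FF p d n = card (KF n)" unfolding FF_def using ffinv[of n] AF_def by simp
  have OPTeq: "OPT p d n = card (V n)" using optc unfolding V_def by simp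
  show ?thesis
  proof (cases "n = 0")
    case True
    then show ?thesis using FFeq OPTeq KF0 V0 by simp
  next
    case False
    then have c: "card (KF n) + 1 \<le> 2 * card (V n)" using cnt[of n] by simp
    have "KF n \<noteq> {}" using ffinv[of n] False by force
    then have "1 \<le> card (KF n)" using finKF[of n] by (simp add: Suc_le_eq card_gt_0_iff)
    then show ?thesis using c FFeq OPTeq by auto
  qed
qed

end
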